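(* Let $F=G/H=G^{\mathbb C}/P$ be a (pseudo-Riemannian) flag manifold and let $J,J'$ be two $G$-invariant complex structures on $F$. Then all Koszul numbers of $J$ are even if and only if all Koszul numbers of $J'$ are even; i.e. divisibility by two of the Koszul numbers does not depend on the invariant complex structure.
   Context: $G$ is a compact connected simply-connected semisimple Lie group, $H$ the centralizer of a torus. Invariant complex structures on $F$ correspond to systems of simple roots $\Pi=\Pi_W\sqcup\Pi_B$ of $\mathfrak g^{\mathbb C}$ with $\Pi_W$ a system of simple roots of the root system $R_H$ of $\mathfrak h^{\mathbb C}$, $\Pi_B=\{\beta_1,\dots,\beta_v\}$. The Koszul form is $\sigma^J=\sum_{\alpha\in R^+\setminus R_H}\alpha=\sum_j k_j\Lambda_j$ with $\Lambda_j$ the fundamental weight of $\beta_j$; the $k_j$ are the Koszul numbers of $J$. *)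

theory Defs
  imports "HOL-Analysis.Analysis"
begin

text \<open>Reduced crystallographic root system spanning the Euclidean space 'a
  (= root system of a complex semisimple Lie algebra, with the Killing-form
  induced inner product on the real span of the roots).\<close>
definition root_system :: "'a::euclidean_space set \<Rightarrow> bool" where
  "root_system R \<longleftrightarrow> finite R \<and> 0 \<notin> R \<and> span R = UNIV \<and>
     (\<forall>\<alpha>\<in>R. \<forall>\<beta>\<in>R. \<beta> - (2 * (\<beta> \<bullet> \<alpha>) / (\<alpha> \<bullet> \<alpha>)) *\<^sub>R \<alpha> \<in> R) \<and>
     (\<forall>\<alpha>\<in>R. \<forall>\<beta>\<in>R. 2 * (\<beta> \<bullet> \<alpha>) / (\<alpha> \<bullet> \<alpha>) \<in> \<int>) \<and>
     (\<forall>\<alpha>\<in>R. \<forall>c::real. c *\<^sub>R \<alpha> \<in> R \<longrightarrow> c = 1 \<or> c = -1)"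

definition simple_system :: "'a::euclidean_space set \<Rightarrow> 'a set \<Rightarrow> bool" where
  "simple_system S P \<longleftrightarrow> P \<subseteq> S \<and> independent P \<and>
     (\<forall>\<alpha>\<in>S. \<exists>c::'a \<Rightarrow> int. \<alpha> = (\<Sum>\<beta>\<in>P. of_int (c \<beta>) *\<^sub>R \<beta>) \<and>
        ((\<forall>\<beta>\<in>P. c \<beta> \<ge> 0) \<or> (\<forall>\<beta>\<in>P. c \<beta> \<le> 0)))"

definition pos_roots :: "'a::euclidean_space set \<Rightarrow> 'a set \<Rightarrow> 'a set" where
  "pos_roots R P = {\<alpha>\<in>R. \<exists>c::'a \<Rightarrow> int. \<alpha> = (\<Sum>\<beta>\<in>P. of_int (c \<beta>) *\<^sub>R \<beta>) \<and> (\<forall>\<beta>\<in>P. c \<beta> \<ge> 0)}"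

text \<open>Root system R_H of the centralizer H of a torus: the roots vanishing on
  a (generic) element x of the Lie algebra of the torus.\<close>
definition centralizer_roots :: "'a::euclidean_space set \<Rightarrow> 'a \<Rightarrow> 'a set" where
  "centralizer_roots R x = {\<alpha>\<in>R. \<alpha> \<bullet> x = 0}"

text \<open>Invariant complex structures on F = G/H correspond to simple systems P of R
  such that P_W = P \<inter> R_H is a simple system of R_H; then P_B = P - R_H.\<close>
definition invariant_complex_structure :: "'a::euclidean_space set \<Rightarrow> 'a set \<Rightarrow> 'a set \<Rightarrow> bool" where
  "invariant_complex_structure R RH P \<longleftrightarrow> simple_system R P \<and> simple_system RH (P \<inter> RH)"

definition koszul_form :: "'a::euclidean_space set \<Rightarrow> 'a set \<Rightarrow> 'a set \<Rightarrow> 'a" where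
  "koszul_form R RH P = (\<Sum>\<alpha>\<in>pos_roots R P - RH. \<alpha>)"

text \<open>Koszul number k_j: coefficient of the fundamental weight of beta_j in the
  Koszul form, i.e. the pairing with the coroot of beta_j.\<close>
definition koszul_number :: "'a::euclidean_space set \<Rightarrow> 'a set \<Rightarrow> 'a set \<Rightarrow> 'a \<Rightarrow> real" where
  "koszul_number R RH P \<beta> = 2 * (koszul_form R RH P \<bullet> \<beta>) / (\<beta> \<bullet> \<beta>)"

end

theory Submission
  imports Defs
begin

definition cp :: "'a::euclidean_space \<Rightarrow> 'a \<Rightarrow> real" where
  "cp \<alpha> \<gamma> = 2 * (\<gamma> \<bullet> \<alpha>) / (\<alpha> \<bullet> \<alpha>)"

definition Kf :: "'a::euclidean_space \<Rightarrow> 'a \<Rightarrow> real" where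
  "Kf \<sigma> v = 2 * (\<sigma> \<bullet> v) / (v \<bullet> v)"

lemma refl_norm:
  fixes \<alpha> \<beta> :: "'a::euclidean_space"
  assumes "\<beta> \<bullet> \<beta> \<noteq> 0"
  shows "(\<alpha> - cp \<beta> \<alpha> *\<^sub>R \<beta>) \<bullet> (\<alpha> - cp \<beta> \<alpha> *\<^sub>R \<beta>) = \<alpha> \<bullet> \<alpha>"
proof -
  have "(\<alpha> - cp \<beta> \<alpha> *\<^sub>R \<beta>) \<bullet> (\<alpha> - cp \<beta> \<alpha> *\<^sub>R \<beta>)
     = \<alpha> \<bullet> \<alpha> - 2 * cp \<beta> \<alpha> * (\<alpha> \<bullet> \<beta>) + cp \<beta> \<alpha> * cp \<beta> \<alpha> * (\<beta> \<bullet> \<beta>)"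
    by (simp add: inner_diff_left inner_diff_right inner_commute algebra_simps)
  also have "\<dots> = \<alpha> \<bullet> \<alpha>" using assms by (simp add: cp_def field_simps power2_eq_square)
  finally show ?thesis .
qed

lemma Kf_refl:
  fixes \<alpha> \<beta> \<sigma> :: "'a::euclidean_space"
  assumes "\<beta> \<bullet> \<beta> \<noteq> 0" "\<alpha> \<bullet> \<alpha> \<noteq> 0"
  shows "Kf \<sigma> \<alpha> = Kf \<sigma> (\<alpha> - cp \<beta> \<alpha> *\<^sub>R \<beta>) + cp \<alpha> \<beta> * Kf \<sigma> \<beta>"
proof -
  have "Kf \<sigma> (\<alpha> - cp \<beta> \<alpha> *\<^sub>R \<beta>) = 2 * (\<sigma> \<bullet> \<alpha> - cp \<beta> \<alpha> * (\<sigma> \<bullet> \<beta>)) / (\<alpha> \<bullet> \<alpha>)"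
    using refl_norm[OF assms(1)] by (simp add: Kf_def inner_diff_right)
  then show ?thesis using assms
    by (simp add: Kf_def cp_def field_simps inner_commute)
qed

lemma Kf_neg: "Kf \<sigma> (- v) = - Kf \<sigma> v"
  by (simp add: Kf_def)


definition evenr :: "real \<Rightarrow> bool" where "evenr r \<longleftrightarrow> (\<exists>m::int. r = 2 * of_int m)"

lemma evenr_add: "evenr a \<Longrightarrow> evenr b \<Longrightarrow> evenr (a + b)"
  unfolding evenr_def by (metis distrib_left of_int_add)
lemma evenr_neg: "evenr a \<Longrightarrow> evenr (- a)"
  unfolding evenr_def by (metis mult_minus_right of_int_minus)
lemma evenr_mult: "c \<in> \<int> \<Longrightarrow> evenr a \<Longrightarrow> evenr (c * a)"
  unfolding evenr_def by (elim Ints_cases exE) (metis mult.left_commute of_int_mult)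
lemma evenr_diff: "evenr (a - b) \<Longrightarrow> evenr a \<longleftrightarrow> evenr b"
  by (metis add_diff_cancel_left' diff_add_cancel diff_minus_eq_add evenr_add evenr_neg)

lemma rs_fin: "root_system R \<Longrightarrow> finite R" by (simp add: root_system_def)
lemma rs_nz: "root_system R \<Longrightarrow> \<alpha> \<in> R \<Longrightarrow> \<alpha> \<bullet> \<alpha> > 0"
  unfolding root_system_def by (metis inner_gt_zero_iff)
lemma rs_refl: "root_system R \<Longrightarrow> \<alpha> \<in> R \<Longrightarrow> \<gamma> \<in> R \<Longrightarrow> \<gamma> - cp \<alpha> \<gamma> *\<^sub>R \<alpha> \<in> R"
  unfolding root_system_def cp_def by blast
lemma rs_int: "root_system R \<Longrightarrow> \<alpha> \<in> R \<Longrightarrow> \<gamma> \<in> R \<Longrightarrow> cp \<alpha> \<gamma> \<in> \<int>"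
  unfolding root_system_def cp_def by blast
lemma rs_red: "root_system R \<Longrightarrow> \<alpha> \<in> R \<Longrightarrow> c *\<^sub>R \<alpha> \<in> R \<Longrightarrow> c = 1 \<or> c = -1"
  unfolding root_system_def by blast
lemma rs_neg: assumes "root_system R" "\<alpha> \<in> R" shows "- \<alpha> \<in> R"
proof -
  have "cp \<alpha> \<alpha> = 2" using rs_nz[OF assms] by (simp add: cp_def)
  then have "\<alpha> - cp \<alpha> \<alpha> *\<^sub>R \<alpha> = - \<alpha>" by (simp add: scaleR_2)
  then show ?thesis using rs_refl[OF assms assms(2)] by simp
qed

definition half :: "'a::euclidean_space set \<Rightarrow> 'a set \<Rightarrow> bool" where
  "half S A \<longleftrightarrow> A \<subseteq> S \<and> (\<forall>\<gamma>\<in>S. \<gamma> \<in> A \<or> - \<gamma> \<in> A) \<and> (\<forall>\<gamma>\<in>A. - \<gamma> \<notin> A)"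

lemma half_parity:
  assumes "finite S" "half S A" "half S B" "\<And>\<gamma>. f (- \<gamma>) = - f \<gamma>" "\<And>\<gamma>. \<gamma> \<in> S \<Longrightarrow> f \<gamma> \<in> \<int>"
  shows "evenr (sum f A - sum f B)"
proof -
  have fA: "finite A" "finite B" using assms(1-3) unfolding half_def by (auto intro: finite_subset)
  have BA: "B - A = uminus ` (A - B)"
  proof
    show "B - A \<subseteq> uminus ` (A - B)"
    proof
      fix g assume g: "g \<in> B - A"
      then have "- g \<in> A" "- g \<notin> B" using assms(2,3) unfolding half_def by auto
      then show "g \<in> uminus ` (A - B)" by (metis DiffI image_eqI minus_minus)
    qed
    show "uminus ` (A - B) \<subseteq> B - A"
    proof
      fix g assume "g \<in> uminus ` (A - B)"
      then obtain h where h: "h \<in> A" "h \<notin> B" "g = - h" by auto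
      then have "h \<in> S" using assms(2) unfolding half_def by auto
      then show "g \<in> B - A" using h assms(2,3) unfolding half_def by auto
    qed
  qed
  have "sum f A = sum f (A \<inter> B) + sum f (A - B)"
    by (metis Int_Diff_disjoint Int_Diff_Un fA(1) finite_Diff finite_Int sum.union_disjoint)
  moreover have "sum f B = sum f (A \<inter> B) + sum f (B - A)"
    by (metis Int_Diff_disjoint Int_Diff_Un Int_commute fA(2) finite_Diff finite_Int sum.union_disjoint)
  moreover have "sum f (B - A) = - sum f (A - B)"
  proof -
    have "sum f (B - A) = sum (f \<circ> uminus) (A - B)" unfolding BA
      by (rule sum.reindex) (simp add: inj_on_def)
    also have "\<dots> = - sum f (A - B)" by (simp add: assms(4) sum_negf)
    finally show ?thesis .
  qed
  ultimately have eq: "sum f A - sum f B = 2 * sum f (A - B)" by simp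
  have "sum f (A - B) \<in> \<int>"
    using assms(2,5) unfolding half_def by (intro Ints_sum) auto
  then obtain m where "sum f (A - B) = of_int m" by (auto elim: Ints_cases)
  then show ?thesis unfolding evenr_def eq by auto
qed


lemma indep_unique:
  fixes P :: "'a::euclidean_space set"
  assumes "independent P" "(\<Sum>b\<in>P. a b *\<^sub>R b) = (\<Sum>b\<in>P. c b *\<^sub>R b)" "\<beta> \<in> P"
  shows "a \<beta> = c \<beta>"
proof -
  have "(\<Sum>b\<in>P. (a b - c b) *\<^sub>R b) = 0"
    using assms(2) by (simp add: scaleR_diff_left sum_subtractf)
  then have "a \<beta> - c \<beta> = 0" using assms(1,3) independent_explicit[of P] by auto
  then show ?thesis by simp
qed

lemma pos_or_neg:
  assumes "root_system R" "simple_system R P" "\<gamma> \<in> R"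
  shows "\<gamma> \<in> pos_roots R P \<or> - \<gamma> \<in> pos_roots R P"
proof -
  obtain c :: "'a \<Rightarrow> int" where c: "\<gamma> = (\<Sum>\<beta>\<in>P. of_int (c \<beta>) *\<^sub>R \<beta>)"
      "(\<forall>\<beta>\<in>P. c \<beta> \<ge> 0) \<or> (\<forall>\<beta>\<in>P. c \<beta> \<le> 0)"
    using assms(2,3) unfolding simple_system_def by blast
  show ?thesis
  proof (cases "\<forall>\<beta>\<in>P. c \<beta> \<ge> 0")
    case True then show ?thesis using c assms(3) unfolding pos_roots_def by blast
  next
    case False
    then have "\<forall>\<beta>\<in>P. - c \<beta> \<ge> 0" using c(2) by auto
    moreover have "- \<gamma> = (\<Sum>\<beta>\<in>P. of_int (- c \<beta>) *\<^sub>R \<beta>)"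
      using c(1) by (simp add: sum_negf[symmetric])
    moreover have "- \<gamma> \<in> R" using rs_neg assms by blast
    ultimately have "- \<gamma> \<in> pos_roots R P" unfolding pos_roots_def
      by (intro CollectI conjI exI[where x="\<lambda>b. - c b"]) auto
    then show ?thesis by blast
  qed
qed

lemma not_both:
  assumes "root_system R" "simple_system R P" "\<gamma> \<in> pos_roots R P"
  shows "- \<gamma> \<notin> pos_roots R P"
proof
  assume n: "- \<gamma> \<in> pos_roots R P"
  obtain c :: "'a \<Rightarrow> int" where c: "\<gamma> = (\<Sum>\<beta>\<in>P. of_int (c \<beta>) *\<^sub>R \<beta>)" "\<forall>\<beta>\<in>P. c \<beta> \<ge> 0"
    and g: "\<gamma> \<in> R" using assms(3) unfolding pos_roots_def by blast
  obtain d :: "'a \<Rightarrow> int" where d: "- \<gamma> = (\<Sum>\<beta>\<in>P. of_int (d \<beta>) *\<^sub>R \<beta>)" "\<forall>\<beta>\<in>P. d \<beta> \<ge> 0"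
    using n unfolding pos_roots_def by blast
  have ind: "independent P" using assms(2) unfolding simple_system_def by blast
  have "(\<Sum>\<beta>\<in>P. real_of_int (c \<beta> + d \<beta>) *\<^sub>R \<beta>) = (\<Sum>\<beta>\<in>P. 0 *\<^sub>R \<beta>)"
    using c(1) d(1) by (simp add: scaleR_add_left sum.distrib) (metis add.commute add_minus_cancel add.right_inverse)
  then have "\<forall>\<beta>\<in>P. real_of_int (c \<beta> + d \<beta>) = 0" using indep_unique[OF ind, of "\<lambda>\<beta>. real_of_int (c \<beta> + d \<beta>)" "\<lambda>_. 0"] by auto
  then have "\<forall>\<beta>\<in>P. c \<beta> = 0" using c(2) d(2) by force
  then have "\<gamma> = 0" using c(1) by simp
  then show False using g rs_nz[OF assms(1)] by fastforce
qed

lemma half_pos: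
  assumes "root_system R" "simple_system R P"
  shows "half (R - centralizer_roots R x) (pos_roots R P - centralizer_roots R x)"
  unfolding half_def
proof (intro conjI ballI)
  show "pos_roots R P - centralizer_roots R x \<subseteq> R - centralizer_roots R x"
    unfolding pos_roots_def by blast
next
  fix g assume g: "g \<in> R - centralizer_roots R x"
  then have "- g \<notin> centralizer_roots R x" unfolding centralizer_roots_def by auto
  then show "g \<in> pos_roots R P - centralizer_roots R x \<or> - g \<in> pos_roots R P - centralizer_roots R x"
    using pos_or_neg[OF assms, of g] g by auto
next
  fix g assume "g \<in> pos_roots R P - centralizer_roots R x"
  then show "- g \<notin> pos_roots R P - centralizer_roots R x" using not_both[OF assms] by blast
qed

lemma half_x:
  assumes "root_system R"
  shows "half (R - centralizer_roots R x) {g\<in>R. g \<bullet> x > 0}"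
  unfolding half_def centralizer_roots_def using rs_neg[OF assms] by auto

lemma K_sum:
  "koszul_number R RH P \<alpha> = (\<Sum>\<gamma>\<in>pos_roots R P - RH. cp \<alpha> \<gamma>)"
  unfolding koszul_number_def koszul_form_def cp_def
  by (simp add: inner_sum_left sum_divide_distrib sum_distrib_left)

lemma K_Kf: "koszul_number R RH P \<alpha> = Kf (koszul_form R RH P) \<alpha>"
  unfolding koszul_number_def Kf_def by simp


lemma sum_x_zero:
  assumes "root_system R" "\<beta> \<in> R" "\<beta> \<bullet> x = 0"
  shows "(\<Sum>\<gamma>\<in>{g\<in>R. g \<bullet> x > 0}. cp \<beta> \<gamma>) = 0"
proof -
  define s where "s \<gamma> = \<gamma> - cp \<beta> \<gamma> *\<^sub>R \<beta>" for \<gamma>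
  have bb: "\<beta> \<bullet> \<beta> > 0" using rs_nz assms by blast
  have cps: "cp \<beta> (s \<gamma>) = - cp \<beta> \<gamma>" for \<gamma>
    using bb by (simp add: s_def cp_def inner_diff_left field_simps)
  have ss: "s (s \<gamma>) = \<gamma>" for \<gamma>
    by (simp add: s_def cps[unfolded s_def] algebra_simps)
  have sx: "s \<gamma> \<bullet> x = \<gamma> \<bullet> x" for \<gamma> using assms(3) by (simp add: s_def inner_diff_left)
  have sR: "\<gamma> \<in> R \<Longrightarrow> s \<gamma> \<in> R" for \<gamma> using rs_refl[OF assms(1,2)] s_def by simp
  let ?H = "{g\<in>R. g \<bullet> x > 0}"
  have "(\<Sum>\<gamma>\<in>?H. cp \<beta> \<gamma>) = (\<Sum>\<gamma>\<in>?H. cp \<beta> (s \<gamma>))"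
    by (rule sum.reindex_bij_witness[where i=s and j=s]) (auto simp: ss sx sR)
  also have "\<dots> = - (\<Sum>\<gamma>\<in>?H. cp \<beta> \<gamma>)" by (simp add: cps sum_negf)
  finally show ?thesis by simp
qed

lemma cp_neg: "cp \<beta> (- \<gamma>) = - cp \<beta> \<gamma>" by (simp add: cp_def)

lemma even_RH:
  assumes "root_system R" "simple_system R P" "\<beta> \<in> R" "\<beta> \<bullet> x = 0"
  shows "evenr (koszul_number R (centralizer_roots R x) P \<beta>)"
proof -
  have "evenr ((\<Sum>\<gamma>\<in>pos_roots R P - centralizer_roots R x. cp \<beta> \<gamma>) - (\<Sum>\<gamma>\<in>{g\<in>R. g \<bullet> x > 0}. cp \<beta> \<gamma>))"
    by (rule half_parity[OF _ half_pos[OF assms(1,2)] half_x[OF assms(1)]])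
       (auto simp: cp_neg rs_fin[OF assms(1)] intro: rs_int[OF assms(1,3)])
  then show ?thesis using sum_x_zero[OF assms(1,3,4)] by (simp add: K_sum)
qed


lemma even_all:
  assumes rs: "root_system R" and ss: "simple_system R P" and hyp: "\<forall>\<beta>\<in>P. evenr (Kf \<sigma> \<beta>)"
  shows "\<forall>\<alpha>\<in>R. evenr (Kf \<sigma> \<alpha>)"
proof -
  have ind: "independent P" and PR: "P \<subseteq> R" using ss unfolding simple_system_def by auto
  have finP: "finite P" using ind independent_bound by blast
  have pos: "\<And>\<alpha> c. \<alpha> \<in> R \<Longrightarrow> \<alpha> = (\<Sum>\<beta>\<in>P. of_int (c \<beta>) *\<^sub>R \<beta>) \<Longrightarrow> \<forall>\<beta>\<in>P. c \<beta> \<ge> 0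
     \<Longrightarrow> nat (\<Sum>\<beta>\<in>P. c \<beta>) = n \<Longrightarrow> evenr (Kf \<sigma> \<alpha>)" for n
  proof (induction n rule: less_induct)
    case (less n \<alpha> c)
    have aa: "\<alpha> \<bullet> \<alpha> > 0" using rs_nz[OF rs less.prems(1)] .
    have "\<alpha> \<bullet> \<alpha> = (\<Sum>\<beta>\<in>P. of_int (c \<beta>) *\<^sub>R \<beta>) \<bullet> \<alpha>"
      using less.prems(2) by metis
    also have "\<dots> = (\<Sum>\<beta>\<in>P. of_int (c \<beta>) * (\<beta> \<bullet> \<alpha>))"
      by (simp add: inner_sum_left)
    finally have aeq: "\<alpha> \<bullet> \<alpha> = (\<Sum>\<beta>\<in>P. of_int (c \<beta>) * (\<beta> \<bullet> \<alpha>))" .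
    have "\<exists>\<beta>\<in>P. of_int (c \<beta>) * (\<beta> \<bullet> \<alpha>) > 0"
    proof (rule ccontr)
      assume "\<not> ?thesis"
      then have "(\<Sum>\<beta>\<in>P. of_int (c \<beta>) * (\<beta> \<bullet> \<alpha>)) \<le> 0"
        by (intro sum_nonpos) (simp add: not_less)
      then show False using aa aeq by simp
    qed
    then obtain \<beta> where b: "\<beta> \<in> P" "of_int (c \<beta>) * (\<beta> \<bullet> \<alpha>) > 0" by blast
    have cb: "c \<beta> > 0" using b less.prems(3)
      by (metis less_eq_real_def mult_zero_left not_less of_int_0 of_int_le_iff)
    have ba: "\<beta> \<bullet> \<alpha> > 0" using b cb by (simp add: zero_less_mult_iff)
    have bR: "\<beta> \<in> R" using b PR by blast
    have bb: "\<beta> \<bullet> \<beta> > 0" using rs_nz[OF rs bR] .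
    show ?case
    proof (cases "\<alpha> = \<beta>")
      case True then show ?thesis using hyp b by blast
    next
      case False
      have kI: "cp \<beta> \<alpha> \<in> \<int>" using rs_int[OF rs bR less.prems(1)] .
      have kpos: "cp \<beta> \<alpha> > 0" using ba bb by (simp add: cp_def inner_commute)
      obtain kk :: int where kk: "cp \<beta> \<alpha> = of_int kk" using kI by (auto elim: Ints_cases)
      have kk1: "kk \<ge> 1" using kpos kk by simp
      define \<alpha>' where "\<alpha>' = \<alpha> - cp \<beta> \<alpha> *\<^sub>R \<beta>"
      have a'R: "\<alpha>' \<in> R" using rs_refl[OF rs bR less.prems(1)] \<alpha>'_def by simp
      define c' where "c' \<gamma> = c \<gamma> - (if \<gamma> = \<beta> then kk else 0)" for \<gamma>
      have dl: "(\<Sum>\<gamma>\<in>P. (if \<gamma> = \<beta> then of_int kk *\<^sub>R \<gamma> else 0)) = of_int kk *\<^sub>R \<beta>"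
        using b(1) finP by (simp add: sum.delta)
      have "(\<Sum>\<gamma>\<in>P. of_int (c' \<gamma>) *\<^sub>R \<gamma>)
          = (\<Sum>\<gamma>\<in>P. of_int (c \<gamma>) *\<^sub>R \<gamma> - (if \<gamma> = \<beta> then of_int kk *\<^sub>R \<gamma> else 0))"
        by (rule sum.cong) (auto simp: c'_def scaleR_diff_left)
      also have "\<dots> = \<alpha>'"
        using dl by (simp add: sum_subtractf less.prems(2)[symmetric] \<alpha>'_def kk)
      finally have a'c: "\<alpha>' = (\<Sum>\<gamma>\<in>P. of_int (c' \<gamma>) *\<^sub>R \<gamma>)" by simp
      obtain d :: "'a \<Rightarrow> int" where d: "\<alpha>' = (\<Sum>\<beta>\<in>P. of_int (d \<beta>) *\<^sub>R \<beta>)"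
          "(\<forall>\<beta>\<in>P. d \<beta> \<ge> 0) \<or> (\<forall>\<beta>\<in>P. d \<beta> \<le> 0)"
        using ss a'R unfolding simple_system_def by blast
      have dce: "(\<Sum>\<beta>\<in>P. of_int (d \<beta>) *\<^sub>R \<beta>) = (\<Sum>\<gamma>\<in>P. of_int (c' \<gamma>) *\<^sub>R \<gamma>)"
        using d(1) a'c by (rule trans[OF sym])
      have dc: "d \<gamma> = c' \<gamma>" if "\<gamma> \<in> P" for \<gamma>
      proof -
        have "real_of_int (d \<gamma>) = real_of_int (c' \<gamma>)"
          using indep_unique[OF ind, of "\<lambda>\<gamma>. real_of_int (d \<gamma>)" "\<lambda>\<gamma>. real_of_int (c' \<gamma>)", OF dce that] .
        then show ?thesis by simp
      qed
      show ?thesis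
      proof (cases "\<forall>\<beta>\<in>P. d \<beta> \<ge> 0")
        case False
        then have dn: "\<forall>\<gamma>\<in>P. d \<gamma> \<le> 0" using d(2) by blast
        have "\<forall>\<gamma>\<in>P. \<gamma> \<noteq> \<beta> \<longrightarrow> c \<gamma> = 0"
          using dn dc less.prems(3) by (force simp: c'_def)
        then have "\<alpha> = (\<Sum>\<gamma>\<in>P. (if \<gamma> = \<beta> then of_int (c \<beta>) *\<^sub>R \<gamma> else 0))"
          by (subst less.prems(2)) (rule sum.cong, auto)
        then have ab: "\<alpha> = of_int (c \<beta>) *\<^sub>R \<beta>" using b(1) finP by (simp add: sum.delta)
        then have "real_of_int (c \<beta>) = 1 \<or> real_of_int (c \<beta>) = -1"
          using rs_red[OF rs bR] less.prems(1) by metis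
        then have "real_of_int (c \<beta>) = 1" using cb by auto
        then show ?thesis using ab False \<open>\<alpha> \<noteq> \<beta>\<close> by simp
      next
        case True
        have "(\<Sum>\<gamma>\<in>P. d \<gamma>) = (\<Sum>\<gamma>\<in>P. c' \<gamma>)" using dc by simp
        also have "\<dots> = (\<Sum>\<gamma>\<in>P. c \<gamma>) - kk"
          using b(1) finP by (simp add: c'_def sum_subtractf sum.delta)
        finally have hs: "(\<Sum>\<gamma>\<in>P. d \<gamma>) = (\<Sum>\<gamma>\<in>P. c \<gamma>) - kk" .
        have "(\<Sum>\<gamma>\<in>P. d \<gamma>) \<ge> 0" using True by (simp add: sum_nonneg)
        then have lt: "nat (\<Sum>\<gamma>\<in>P. d \<gamma>) < n" using hs kk1 less.prems(4) by linarith
        have e': "evenr (Kf \<sigma> \<alpha>')" using less.IH[OF lt a'R d(1) True refl] .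
        have "Kf \<sigma> \<alpha> = Kf \<sigma> \<alpha>' + cp \<alpha> \<beta> * Kf \<sigma> \<beta>"
          unfolding \<alpha>'_def using Kf_refl bb aa by (metis less_irrefl)
        moreover have "evenr (cp \<alpha> \<beta> * Kf \<sigma> \<beta>)"
          using evenr_mult rs_int[OF rs less.prems(1) bR] hyp b(1) by blast
        ultimately show ?thesis using e' evenr_add by simp
      qed
    qed
  qed
  show ?thesis
  proof
    fix \<alpha> assume aR: "\<alpha> \<in> R"
    obtain c :: "'a \<Rightarrow> int" where c: "\<alpha> = (\<Sum>\<beta>\<in>P. of_int (c \<beta>) *\<^sub>R \<beta>)"
        "(\<forall>\<beta>\<in>P. c \<beta> \<ge> 0) \<or> (\<forall>\<beta>\<in>P. c \<beta> \<le> 0)"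
      using ss aR unfolding simple_system_def by blast
    show "evenr (Kf \<sigma> \<alpha>)"
    proof (cases "\<forall>\<beta>\<in>P. c \<beta> \<ge> 0")
      case True show ?thesis using pos[OF aR c(1) True refl] .
    next
      case False
      then have n: "\<forall>\<beta>\<in>P. - c \<beta> \<ge> 0" using c(2) by auto
      have "- \<alpha> = (\<Sum>\<beta>\<in>P. of_int (- c \<beta>) *\<^sub>R \<beta>)"
        using c(1) by (simp add: sum_negf[symmetric])
      then have "evenr (Kf \<sigma> (- \<alpha>))" using pos[OF rs_neg[OF rs aR] _ n refl] by blast
      then have "evenr (- Kf \<sigma> \<alpha>)" by (simp only: Kf_neg)
      then show ?thesis using evenr_neg[of "- Kf \<sigma> \<alpha>"] by simp
    qed
  qed
qed


lemma char_even:
  assumes rs: "root_system R" and ics: "invariant_complex_structure R (centralizer_roots R x) Q"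
  shows "(\<forall>\<beta>\<in>Q - centralizer_roots R x.
            \<exists>m::int. koszul_number R (centralizer_roots R x) Q \<beta> = 2 * of_int m)
     \<longleftrightarrow> (\<forall>\<alpha>\<in>R. evenr (koszul_number R (centralizer_roots R x) Q \<alpha>))"
proof -
  have ss: "simple_system R Q" using ics unfolding invariant_complex_structure_def by blast
  have QR: "Q \<subseteq> R" using ss unfolding simple_system_def by blast
  show ?thesis
  proof
    assume L: "\<forall>\<beta>\<in>Q - centralizer_roots R x.
            \<exists>m::int. koszul_number R (centralizer_roots R x) Q \<beta> = 2 * of_int m"
    have "\<forall>\<beta>\<in>Q. evenr (Kf (koszul_form R (centralizer_roots R x) Q) \<beta>)"
    proof
      fix \<beta> assume b: "\<beta> \<in> Q"
      show "evenr (Kf (koszul_form R (centralizer_roots R x) Q) \<beta>)"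
      proof (cases "\<beta> \<in> centralizer_roots R x")
        case True
        then have "\<beta> \<bullet> x = 0" unfolding centralizer_roots_def by blast
        then show ?thesis using even_RH[OF rs ss, of \<beta> x] b QR K_Kf by (metis subsetD)
      next
        case False
        then show ?thesis using L b K_Kf unfolding evenr_def by (metis DiffI)
      qed
    qed
    then show "\<forall>\<alpha>\<in>R. evenr (koszul_number R (centralizer_roots R x) Q \<alpha>)"
      using even_all[OF rs ss] K_Kf by metis
  next
    assume "\<forall>\<alpha>\<in>R. evenr (koszul_number R (centralizer_roots R x) Q \<alpha>)"
    then show "\<forall>\<beta>\<in>Q - centralizer_roots R x.
            \<exists>m::int. koszul_number R (centralizer_roots R x) Q \<beta> = 2 * of_int m"
      using QR unfolding evenr_def by blast
  qed
qed

theorem mainTheorem16: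
  fixes R :: "'a::euclidean_space set" and x :: 'a and P P' :: "'a set"
  assumes "root_system R"
    and "invariant_complex_structure R (centralizer_roots R x) P"
    and "invariant_complex_structure R (centralizer_roots R x) P'"
  shows "(\<forall>\<beta>\<in>P - centralizer_roots R x.
            \<exists>m::int. koszul_number R (centralizer_roots R x) P \<beta> = 2 * of_int m)
     \<longleftrightarrow> (\<forall>\<beta>\<in>P' - centralizer_roots R x.
            \<exists>m::int. koszul_number R (centralizer_roots R x) P' \<beta> = 2 * of_int m)"
proof -
  have ss: "simple_system R P" "simple_system R P'"
    using assms(2,3) unfolding invariant_complex_structure_def by blast+
  have "evenr (koszul_number R (centralizer_roots R x) P \<alpha> - koszul_number R (centralizer_roots R x) P' \<alpha>)"
    if a: "\<alpha> \<in> R" for \<alpha>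
    unfolding K_sum
    by (rule half_parity[OF _ half_pos[OF assms(1) ss(1)] half_pos[OF assms(1) ss(2)]])
       (auto simp: cp_neg rs_fin[OF assms(1)] intro: rs_int[OF assms(1) a])
  then have "(\<forall>\<alpha>\<in>R. evenr (koszul_number R (centralizer_roots R x) P \<alpha>))
      \<longleftrightarrow> (\<forall>\<alpha>\<in>R. evenr (koszul_number R (centralizer_roots R x) P' \<alpha>))"
    using evenr_diff by blast
  then show ?thesis using char_even[OF assms(1,2)] char_even[OF assms(1,3)] by simp
qed

end
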